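(* Assume the rearrangement setting described in the context, with $R$ a poset. Assume moreover that: - $\beta$ is a bijection $X\to Y$ which is a homomorphism from $R|_X$ to $R|_Y$; - for every $x\in X$, $N^{in}_R(x)\setminus M\subseteq N^{in}_R(\beta(x))$ and $N^{out}_R(x)\setminus M\subseteq N^{out}_R(\beta(x))$; - $X$ is convex in $R$; - there is no walk in $R$ from $M$ to $Y$ and no walk in $R$ from $Y$ to $M$. Let $T$ be the transitive hull of $S$. Then $T$ is a poset and $R\sqsubseteq_\Gamma T$ with respect to $\mathfrak{D}$.
   Context: **Digraphs and homomorphisms.** - A digraph $G$ is a pair $(V(G),A(G))$, where $V(G)$ is a finite non-empty set and $A(G)\subseteq V(G)\times V(G)$. Arcs are written $vw$. - A poset is a reflexive, antisymmetric, transitive digraph. - A homomorphism $\xi:G\to H$ is a map $V(G)\to V(H)$ with $\xi(v)\xi(w)\in A(H)$ for all $vw\in A(G)$. $\mathcal{H}(G,H)$ is the set of homomorphisms. - Two vertices $u,w$ are adjacent if $uw\in A(G)$ or $wu\in A(G)$. - $N_G(v)$ is the set of $w\ne v$ adjacent to $v$. $N^{in}_G(v)=\{w\in N_G(v):wv\in A(G)\}$ and $N^{out}_G(v)=\{w\in N_G(v):vw\in A(G)\}$. - $G|_X$ is the induced subdigraph on $X$. - A walk is a sequence $v_0,\dots,v_I$ with $I\ge1$ and $v_{i-1}v_i\in A(G)$. A walk from $A$ to $B$ is one with $v_0\in A$ and $v_I\in B$. - A set $X$ is convex if every walk starting and ending in $X$ has all its vertices in $X$. - The transitive hull of $G$ is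 the digraph on $V(G)$ whose arc set is the smallest transitive relation containing $A(G)$. - $\mathfrak{D}$ is the class of all digraphs. **Rearrangement setting.** - $R=(Z,A(R))$ is a digraph. - $X,M\subseteq Z$ are disjoint. - $Y\subseteq Z$ satisfies $M\cap Y=\emptyset$ and $M\cap N_R(y)=\emptyset$ for all $y\in Y$. - $\beta:X\to Y$ is a map. - $S$ is the digraph with $V(S)=Z$ and $A(S)=A_r\cup A_d\cup A_u$, where: - $A_r=A(R)\setminus((M\times X)\cup(X\times M))$; - $A_d=\{m\beta(x): mx\in A(R)\cap(M\times X)\}$; - $A_u=\{\beta(x)m: xm\in A(R)\cap(X\times M)\}$. **Connectivity and schemes.** - For $X'\subseteq V(G)$ and $v,w\in X'$, the vertices $v$ and $w$ are connected in $X'$ if $v=w$, or if there are $z_0=v,\dots,z_I=w$ in $X'$ with consecutive terms adjacent. - $\gamma_{X'}(v)$ is the set of such $w$. - $\Gamma_\xi(v)=\gamma_{\xi^{-1}(\xi(v))}(v)$. - $\mathfrak{D}_r$ is a fixed system of representatives of $\mathfrak{D}$ up to isomorphism. - $R\sqsubseteq_\Gamma T$ with respect to $\mathfrak{D}$ means there exist injective maps $\rho_G:\mathcal{H}(G,R)\to\mathcal{H}(G,T)$, $G\in\mathfrak{D}_r$, with $\Gamma_{\rho_G(\xi)}(v)=\Gamma_\xi(v)$ for all $G$, $\xi$ and $v$. *)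

theory Defs
  imports Main "HOL-Library.FuncSet"
begin

type_synonym 'a digraph = "'a set \<times> ('a \<times> 'a) set"

definition verts :: "'a digraph \<Rightarrow> 'a set" where "verts G = fst G"
definition arcs :: "'a digraph \<Rightarrow> ('a \<times> 'a) set" where "arcs G = snd G"

definition is_digraph :: "'a digraph \<Rightarrow> bool" where
  "is_digraph G \<longleftrightarrow> finite (verts G) \<and> verts G \<noteq> {} \<and> arcs G \<subseteq> verts G \<times> verts G"

definition is_poset :: "'a digraph \<Rightarrow> bool" where
  "is_poset G \<longleftrightarrow> is_digraph G \<and> refl_on (verts G) (arcs G) \<and> antisym (arcs G) \<and> trans (arcs G)"

definition homs :: "'a digraph \<Rightarrow> 'b digraph \<Rightarrow> ('a \<Rightarrow> 'b) set" where
  "homs G H = {\<xi> \<in> verts G \<rightarrow>\<^sub>E verts H. \<forall>(v, w) \<in> arcs G. (\<xi> v, \<xi> w) \<in> arcs H}"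

definition induced :: "'a digraph \<Rightarrow> 'a set \<Rightarrow> 'a digraph" where
  "induced G X = (X, arcs G \<inter> (X \<times> X))"

definition nbrs :: "'a digraph \<Rightarrow> 'a \<Rightarrow> 'a set" where
  "nbrs G v = {w \<in> verts G. w \<noteq> v \<and> ((v, w) \<in> arcs G \<or> (w, v) \<in> arcs G)}"

definition nbrs_in :: "'a digraph \<Rightarrow> 'a \<Rightarrow> 'a set" where
  "nbrs_in G v = {w \<in> nbrs G v. (w, v) \<in> arcs G}"

definition nbrs_out :: "'a digraph \<Rightarrow> 'a \<Rightarrow> 'a set" where
  "nbrs_out G v = {w \<in> nbrs G v. (v, w) \<in> arcs G}"

definition is_walk :: "'a digraph \<Rightarrow> 'a list \<Rightarrow> bool" where
  "is_walk G p \<longleftrightarrow> length p \<ge> 2 \<and> (\<forall>i. Suc i < length p \<longrightarrow> (p ! i, p ! Suc i) \<in> arcs G)"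

definition walk_from_to :: "'a digraph \<Rightarrow> 'a set \<Rightarrow> 'a set \<Rightarrow> 'a list \<Rightarrow> bool" where
  "walk_from_to G A B p \<longleftrightarrow> is_walk G p \<and> hd p \<in> A \<and> last p \<in> B"

definition convex :: "'a digraph \<Rightarrow> 'a set \<Rightarrow> bool" where
  "convex G X \<longleftrightarrow> (\<forall>p. walk_from_to G X X p \<longrightarrow> set p \<subseteq> X)"

definition transitive_hull :: "'a digraph \<Rightarrow> 'a digraph" where
  "transitive_hull G = (verts G, (arcs G)\<^sup>+)"

definition rearr :: "'a digraph \<Rightarrow> 'a set \<Rightarrow> 'a set \<Rightarrow> ('a \<Rightarrow> 'a) \<Rightarrow> 'a digraph" where
  "rearr R X M \<beta> = (verts R,
      (arcs R - ((M \<times> X) \<union> (X \<times> M)))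
    \<union> {(m, \<beta> x) | m x. (m, x) \<in> arcs R \<inter> (M \<times> X)}
    \<union> {(\<beta> x, m) | x m. (x, m) \<in> arcs R \<inter> (X \<times> M)})"

definition conn_comp :: "'a digraph \<Rightarrow> 'a set \<Rightarrow> 'a \<Rightarrow> 'a set" where
  "conn_comp G X' v = {w \<in> X'. v \<in> X' \<and>
     (v, w) \<in> {(a, b). a \<in> X' \<and> b \<in> X' \<and> ((a, b) \<in> arcs G \<or> (b, a) \<in> arcs G)}\<^sup>*}"

definition Gamma :: "'a digraph \<Rightarrow> ('a \<Rightarrow> 'b) \<Rightarrow> 'a \<Rightarrow> 'a set" where
  "Gamma G \<xi> v = conn_comp G {u \<in> verts G. \<xi> u = \<xi> v} v"

text \<open>Every finite digraph is isomorphic to one with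
  vertices in nat, so digraphs on nat contain a system of representatives; the existence of
  the family (\<rho>_G) is equivalent (by choice and isomorphism invariance) to existence of each
  \<rho>_G separately.\<close>
definition gamma_below :: "'a digraph \<Rightarrow> 'a digraph \<Rightarrow> bool" where
  "gamma_below R T \<longleftrightarrow> (\<forall>G :: nat digraph. is_digraph G \<longrightarrow>
     (\<exists>\<rho>. \<rho> \<in> homs G R \<rightarrow> homs G T \<and> inj_on \<rho> (homs G R) \<and>
          (\<forall>\<xi> \<in> homs G R. \<forall>v \<in> verts G. Gamma G (\<rho> \<xi>) v = Gamma G \<xi> v)))"

end

theory Submission
  imports Defs
begin

locale rs =
  fixes R :: "'a digraph" and X M Y :: "'a set" and \<beta> :: "'a \<Rightarrow> 'a"
  assumes poset: "is_poset R"
    and XV: "X \<subseteq> verts R" and MV: "M \<subseteq> verts R" and XM: "X \<inter> M = {}"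
    and YV: "Y \<subseteq> verts R" and MY: "M \<inter> Y = {}" and MN: "\<forall>y \<in> Y. M \<inter> nbrs R y = {}"
    and bij: "bij_betw \<beta> X Y"
    and hom: "\<forall>x1 \<in> X. \<forall>x2 \<in> X. (x1, x2) \<in> arcs (induced R X) \<longrightarrow> (\<beta> x1, \<beta> x2) \<in> arcs (induced R Y)"
    and nin: "\<forall>x \<in> X. nbrs_in R x - M \<subseteq> nbrs_in R (\<beta> x)"
    and nout: "\<forall>x \<in> X. nbrs_out R x - M \<subseteq> nbrs_out R (\<beta> x)"
    and cvx: "convex R X"
    and noMYw: "\<not> (\<exists>p. walk_from_to R M Y p)"
    and noYMw: "\<not> (\<exists>p. walk_from_to R Y M p)"
begin

abbreviation "A \<equiv> arcs R"

lemma arcsV: "(a,b) \<in> A \<Longrightarrow> a \<in> verts R \<and> b \<in> verts R"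
  using poset by (auto simp: is_poset_def is_digraph_def)

lemma rf: "a \<in> verts R \<Longrightarrow> (a,a) \<in> A"
  using poset by (auto simp: is_poset_def refl_on_def)

lemma tr: "(a,b) \<in> A \<Longrightarrow> (b,c) \<in> A \<Longrightarrow> (a,c) \<in> A"
  using poset by (auto simp: is_poset_def dest: transD)

lemma asy: "(a,b) \<in> A \<Longrightarrow> (b,a) \<in> A \<Longrightarrow> a = b"
  using poset by (auto simp: is_poset_def dest: antisymD)

lemma walk2: "(a,b) \<in> A \<Longrightarrow> is_walk R [a,b]"
  by (auto simp: is_walk_def less_Suc_eq)

lemma noMY: "m \<in> M \<Longrightarrow> y \<in> Y \<Longrightarrow> (m,y) \<in> A \<Longrightarrow> False"
proof -
  assume "m \<in> M" "y \<in> Y" "(m,y) \<in> A"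
  hence "walk_from_to R M Y [m,y]" using walk2 by (simp add: walk_from_to_def)
  thus False using noMYw by blast
qed

lemma noYM: "m \<in> M \<Longrightarrow> y \<in> Y \<Longrightarrow> (y,m) \<in> A \<Longrightarrow> False"
proof -
  assume "m \<in> M" "y \<in> Y" "(y,m) \<in> A"
  hence "walk_from_to R Y M [y,m]" using walk2 by (simp add: walk_from_to_def)
  thus False using noYMw by blast
qed

lemma bY: "x \<in> X \<Longrightarrow> \<beta> x \<in> Y"
  using bij by (auto simp: bij_betw_def)

lemma binj: "x \<in> X \<Longrightarrow> x' \<in> X \<Longrightarrow> \<beta> x = \<beta> x' \<Longrightarrow> x = x'"
  using bij by (auto simp: bij_betw_def inj_on_def)

lemma bM: "x \<in> X \<Longrightarrow> \<beta> x \<notin> M"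
  using bY MY by auto

lemma bR: "x1 \<in> X \<Longrightarrow> x2 \<in> X \<Longrightarrow> (x1,x2) \<in> A \<Longrightarrow> (\<beta> x1, \<beta> x2) \<in> A"
  using hom by (auto simp: induced_def arcs_def)

lemma outN: "x \<in> X \<Longrightarrow> (x,z) \<in> A \<Longrightarrow> z \<notin> M \<Longrightarrow> z \<noteq> x \<Longrightarrow> (\<beta> x, z) \<in> A \<and> z \<noteq> \<beta> x"
  using nout arcsV[of x z] by (fastforce simp: nbrs_out_def nbrs_def)

lemma inN: "x \<in> X \<Longrightarrow> (z,x) \<in> A \<Longrightarrow> z \<notin> M \<Longrightarrow> z \<noteq> x \<Longrightarrow> (z, \<beta> x) \<in> A \<and> z \<noteq> \<beta> x"
  using nin arcsV[of z x] by (fastforce simp: nbrs_in_def nbrs_def)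

lemma notadj: "x \<in> X \<Longrightarrow> (x, \<beta> x) \<in> A \<or> (\<beta> x, x) \<in> A \<Longrightarrow> \<beta> x = x"
  using outN[of x "\<beta> x"] inN[of x "\<beta> x"] bM by auto

definition "Sa = arcs (rearr R X M \<beta>)"

lemma S_cases:
  assumes "(a,b) \<in> Sa"
  shows "((a,b) \<in> A \<and> \<not>(a \<in> M \<and> b \<in> X) \<and> \<not>(a \<in> X \<and> b \<in> M))
     \<or> (\<exists>x\<in>X. a \<in> M \<and> b = \<beta> x \<and> (a,x) \<in> A)
     \<or> (\<exists>x\<in>X. b \<in> M \<and> a = \<beta> x \<and> (x,b) \<in> A)"
  using assms by (auto simp: Sa_def rearr_def arcs_def)

definition "Inv a b \<longleftrightarrow> (a,b) \<in> A
  \<or> (\<exists>x\<in>X. \<exists>m\<in>M. (a,m)\<in>A \<and> (m,x)\<in>A \<and> (\<beta> x, b) \<in> A)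
  \<or> (\<exists>x\<in>X. \<exists>m\<in>M. (a,\<beta> x) \<in> A \<and> (x,m) \<in> A \<and> (m,b) \<in> A)
  \<or> (\<exists>x0\<in>X. \<exists>x'\<in>X. \<exists>m\<in>M. \<exists>m'\<in>M. (a,m)\<in>A \<and> (m,x0)\<in>A \<and> (\<beta> x0, \<beta> x')\<in>A \<and> (x',m')\<in>A \<and> (m',b)\<in>A)"

lemma Inv_base: "(a,b) \<in> Sa \<Longrightarrow> Inv a b"
  unfolding Inv_def
  apply (drule S_cases)
  apply (elim disjE bexE conjE)
  using rf MV XV bY YV apply blast
  using rf MV XV bY YV apply (metis subsetD)
  using rf MV XV bY YV apply (metis subsetD)
  done

lemma I0: "(a,b) \<in> A \<Longrightarrow> Inv a b" unfolding Inv_def by blast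
lemma I1: "x\<in>X \<Longrightarrow> m\<in>M \<Longrightarrow> (a,m)\<in>A \<Longrightarrow> (m,x)\<in>A \<Longrightarrow> (\<beta> x, b) \<in> A \<Longrightarrow> Inv a b"
  unfolding Inv_def by blast
lemma I2: "x\<in>X \<Longrightarrow> m\<in>M \<Longrightarrow> (a,\<beta> x)\<in>A \<Longrightarrow> (x,m)\<in>A \<Longrightarrow> (m, b) \<in> A \<Longrightarrow> Inv a b"
  unfolding Inv_def by blast
lemma I3: "x0\<in>X \<Longrightarrow> x'\<in>X \<Longrightarrow> m\<in>M \<Longrightarrow> m'\<in>M \<Longrightarrow> (a,m)\<in>A \<Longrightarrow> (m,x0)\<in>A \<Longrightarrow>
   (\<beta> x0, \<beta> x')\<in>A \<Longrightarrow> (x',m')\<in>A \<Longrightarrow> (m',b)\<in>A \<Longrightarrow> Inv a b"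
  unfolding Inv_def by blast

lemma InvE:
  assumes "Inv a b"
  obtains "(a,b) \<in> A"
  | x m where "x\<in>X" "m\<in>M" "(a,m)\<in>A" "(m,x)\<in>A" "(\<beta> x, b) \<in> A"
  | x m where "x\<in>X" "m\<in>M" "(a,\<beta> x)\<in>A" "(x,m)\<in>A" "(m, b) \<in> A"
  | x0 x' m m' where "x0\<in>X" "x'\<in>X" "m\<in>M" "m'\<in>M" "(a,m)\<in>A" "(m,x0)\<in>A"
   "(\<beta> x0, \<beta> x')\<in>A" "(x',m')\<in>A" "(m',b)\<in>A"
  using assms unfolding Inv_def by blast

lemma Inv_r: assumes "Inv a b" "(b,c) \<in> A" shows "Inv a c"
  using assms(1)
proof (cases rule: InvE)
  case 1 thus ?thesis using I0 tr[OF _ assms(2)] by blast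
next
  case (2 x m) show ?thesis by (rule I1[OF 2(1,2,3,4) tr[OF 2(5) assms(2)]])
next
  case (3 x m) show ?thesis by (rule I2[OF 3(1,2,3,4) tr[OF 3(5) assms(2)]])
next
  case (4 x0 x' m m') show ?thesis by (rule I3[OF 4(1-8) tr[OF 4(9) assms(2)]])
qed

lemma Inv_d: assumes "Inv a b" "b \<in> M" "x \<in> X" "(b,x) \<in> A" shows "Inv a (\<beta> x)"
proof -
  have bx: "\<beta> x \<in> verts R" using assms bY YV by auto
  from assms(1) show ?thesis
  proof (cases rule: InvE)
    case 1 thus ?thesis using I1[OF assms(3) assms(2) _ assms(4) rf[OF bx]] by blast
  next
    case (2 x0 m)
    thus ?thesis using noYM[of b "\<beta> x0"] bY assms by blast
  next
    case (3 x0 m)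
    hence "(x0,x) \<in> A" using tr assms by blast
    hence "(\<beta> x0, \<beta> x) \<in> A" using bR 3 assms by blast
    thus ?thesis using tr 3 I0 by blast
  next
    case (4 x0 x' m m')
    hence "(x',x) \<in> A" using tr assms by blast
    hence "(\<beta> x', \<beta> x) \<in> A" using bR 4 assms by blast
    hence "(\<beta> x0, \<beta> x) \<in> A" using tr 4 by blast
    thus ?thesis using 4 I1[of x0 m a "\<beta> x"] by blast
  qed
qed

lemma Inv_u: assumes "Inv a b" "b = \<beta> x" "x \<in> X" "c \<in> M" "(x,c) \<in> A" shows "Inv a c"
proof -
  have cv: "c \<in> verts R" using assms MV by auto
  from assms(1) show ?thesis
  proof (cases rule: InvE)
    case 1 thus ?thesis using I2[OF assms(3) assms(4) _ assms(5) rf[OF cv]] assms(2) by blast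
  next
    case (2 x0 m)
    thus ?thesis using I3[OF 2(1) assms(3) 2(2) assms(4) 2(3) 2(4) _ assms(5) rf[OF cv]] assms(2) by blast
  next
    case (3 x0 m)
    thus ?thesis using noMY[of m b] bY assms by blast
  next
    case (4 x0 x' m m')
    thus ?thesis using noMY[of m' b] bY assms by blast
  qed
qed

lemma Inv_trancl: "(a,b) \<in> Sa\<^sup>+ \<Longrightarrow> Inv a b"
proof (induction rule: trancl_induct)
  case (base y) thus ?case by (rule Inv_base)
next
  case (step y z)
  from S_cases[OF step(2)] show ?case
  proof (elim disjE bexE conjE)
    assume "(y,z) \<in> A" thus ?case using Inv_r step by blast
  next
    fix x assume "x \<in> X" "y \<in> M" "z = \<beta> x" "(y,x) \<in> A"
    thus ?case using Inv_d step by blast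
  next
    fix x assume "x \<in> X" "z \<in> M" "y = \<beta> x" "(x,z) \<in> A"
    thus ?case using Inv_u step by blast
  qed
qed

lemma XMne: "x \<in> X \<Longrightarrow> m \<in> M \<Longrightarrow> (x,m) \<in> A \<Longrightarrow> (m,x) \<in> A \<Longrightarrow> False"
  using asy XM by blast

lemma c14: assumes "(a,b) \<in> A" "x0\<in>X" "x'\<in>X" "m\<in>M" "m'\<in>M" "(b,m)\<in>A" "(m,x0)\<in>A"
   "(\<beta> x0, \<beta> x')\<in>A" "(x',m')\<in>A" "(m',a)\<in>A" shows False
proof -
  have 1: "(m', x0) \<in> A" using tr[OF tr[OF tr[OF assms(10) assms(1)] assms(6)] assms(7)] .
  have "(x',x0) \<in> A" using tr[OF assms(9) 1] .
  hence "(\<beta> x', \<beta> x0) \<in> A" using bR assms by blast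
  hence "x0 = x'" using asy[OF assms(8)] binj assms by metis
  thus False using XMne[OF assms(2) assms(5) _ 1] assms(9) by blast
qed

lemma c23: assumes "x1\<in>X" "m1\<in>M" "(a,m1)\<in>A" "(m1,x1)\<in>A" "(\<beta> x1, b) \<in> A"
   "x\<in>X" "m\<in>M" "(b,\<beta> x)\<in>A" "(x,m)\<in>A" "(m, a) \<in> A" shows False
proof -
  have 1: "(m,x1) \<in> A" using tr[OF tr[OF assms(10) assms(3)] assms(4)] .
  have "(x,x1) \<in> A" using tr[OF assms(9) 1] .
  hence "(\<beta> x, \<beta> x1) \<in> A" using bR assms by blast
  moreover have "(\<beta> x1, \<beta> x) \<in> A" using tr[OF assms(5) assms(8)] .
  ultimately have "x = x1" using asy binj assms by metis
  thus False using XMne[OF assms(1) assms(7) _ 1] assms(9) by blast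
qed

lemma c44: assumes "x0\<in>X" "x'\<in>X" "m\<in>M" "m'\<in>M" "(a,m)\<in>A" "(m,x0)\<in>A"
   "(\<beta> x0, \<beta> x')\<in>A" "(x',m')\<in>A" "(m',b)\<in>A"
   "z0\<in>X" "z'\<in>X" "n\<in>M" "n'\<in>M" "(b,n)\<in>A" "(n,z0)\<in>A"
   "(\<beta> z0, \<beta> z')\<in>A" "(z',n')\<in>A" "(n',a)\<in>A" shows False
proof -
  have 3: "(m',z0) \<in> A" using tr[OF tr[OF assms(9) assms(14)] assms(15)] .
  have "(x',z0) \<in> A" using tr[OF assms(8) 3] .
  hence 1: "(\<beta> x', \<beta> z0) \<in> A" using bR assms by blast
  have "(z',x0) \<in> A" using tr[OF tr[OF tr[OF assms(17) assms(18)] assms(5)] assms(6)] .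
  hence 2: "(\<beta> z', \<beta> x0) \<in> A" using bR assms by blast
  have "(\<beta> x0, \<beta> z0) \<in> A" using tr[OF assms(7) 1] .
  moreover have "(\<beta> z0, \<beta> x0) \<in> A" using tr[OF assms(16) 2] .
  ultimately have "x0 = z0" using asy binj assms by metis
  hence "(x0,m') \<in> A" using tr[OF _ assms(8)] asy[OF assms(7)] binj assms 1 by metis
  thus False using XMne[OF assms(1) assms(4) _ ] 3 \<open>x0 = z0\<close> by blast
qed

lemma Inv_anti: assumes "Inv a b" "Inv b a" shows "a = b"
  using assms(1)
proof (cases rule: InvE)
  case 1
  note ab = this
  from assms(2) show ?thesis
  proof (cases rule: InvE)
    case 1 thus ?thesis using ab asy by blast
  next
    case (2 x m) thus ?thesis using noYM[OF 2(2) bY[OF 2(1)] tr[OF tr[OF 2(5) ab] 2(3)]] by blast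
  next
    case (3 x m) thus ?thesis using noMY[OF 3(2) bY[OF 3(1)] tr[OF tr[OF 3(5) ab] 3(3)]] by blast
  next
    case (4 x0 x' m m') thus ?thesis using c14[of a b x0 x' m m'] ab by blast
  qed
next
  case (2 x1 m1)
  note h = this
  from assms(2) show ?thesis
  proof (cases rule: InvE)
    case 1 thus ?thesis using noYM[OF h(2) bY[OF h(1)] tr[OF tr[OF h(5) 1] h(3)]] by blast
  next
    case (2 x m) thus ?thesis using noYM[OF 2(2) bY[OF h(1)] tr[OF h(5) 2(3)]] by blast
  next
    case (3 x m) thus ?thesis using c23[of x1 m1 a b x m] 3 h by blast
  next
    case (4 x0 x' m m') thus ?thesis using noYM[OF 4(3) bY[OF h(1)] tr[OF h(5) 4(5)]] by blast
  qed
next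
  case (3 x1 m1)
  note h = this
  from assms(2) show ?thesis
  proof (cases rule: InvE)
    case 1 thus ?thesis using noMY[OF h(2) bY[OF h(1)] tr[OF tr[OF h(5) 1] h(3)]] by blast
  next
    case (2 x m) thus ?thesis using c23[of x m b a x1 m1] 2 h by blast
  next
    case (3 x m) thus ?thesis using noMY[OF h(2) bY[OF 3(1)] tr[OF h(5) 3(3)]] by blast
  next
    case (4 x0 x' m m') thus ?thesis using noMY[OF 4(4) bY[OF h(1)] tr[OF 4(9) h(3)]] by blast
  qed
next
  case (4 x0 x' m m')
  note h = this
  from assms(2) show ?thesis
  proof (cases rule: InvE)
    case 1 thus ?thesis using c14[of b a x0 x' m m'] h by blast
  next
    case (2 x m1) thus ?thesis using noYM[OF h(3) bY[OF 2(1)] tr[OF 2(5) h(5)]] by blast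
  next
    case (3 x m1) thus ?thesis using noMY[OF h(4) bY[OF 3(1)] tr[OF h(9) 3(3)]] by blast
  next
    case (4 z0 z' n n') thus ?thesis using c44[of x0 x' m m' a b z0 z' n n'] h by blast
  qed
qed

lemma poset_T: "is_poset (transitive_hull (rearr R X M \<beta>))"
proof -
  have V: "verts (transitive_hull (rearr R X M \<beta>)) = verts R"
    by (simp add: transitive_hull_def rearr_def verts_def)
  have Ar: "arcs (transitive_hull (rearr R X M \<beta>)) = Sa\<^sup>+"
    by (simp add: transitive_hull_def Sa_def arcs_def)
  have sub: "Sa \<subseteq> verts R \<times> verts R"
  proof
    fix p assume "p \<in> Sa"
    then obtain a b where p: "p = (a,b)" "(a,b) \<in> Sa" by (cases p) auto
    from S_cases[OF p(2)] show "p \<in> verts R \<times> verts R"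
      using p arcsV bY YV MV by blast
  qed
  hence sub2: "Sa\<^sup>+ \<subseteq> verts R \<times> verts R"
    by (metis trancl_subset_Sigma)
  have loops: "a \<in> verts R \<Longrightarrow> (a,a) \<in> Sa" for a
    using rf XM by (auto simp: Sa_def rearr_def arcs_def)
  have dg: "is_digraph R" using poset by (simp add: is_poset_def)
  show ?thesis
    unfolding is_poset_def is_digraph_def V Ar
    using dg sub2 loops Inv_anti Inv_trancl
    by (auto simp: is_digraph_def refl_on_def antisym_def trans_trancl intro: r_into_trancl)
qed

end


lemma Gamma_mem: "w \<in> Gamma G f v \<longleftrightarrow> w \<in> verts G \<and> f w = f v \<and> v \<in> verts G \<and>
  (v,w) \<in> {(a,b). (a \<in> verts G \<and> f a = f v) \<and> (b \<in> verts G \<and> f b = f v) \<and> ((a,b) \<in> arcs G \<or> (b,a) \<in> arcs G)}\<^sup>*"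
  by (simp add: Gamma_def conn_comp_def)

lemma Gamma_self: "v \<in> verts G \<Longrightarrow> v \<in> Gamma G f v"
  by (simp add: Gamma_mem)

lemma Gamma_val: "u \<in> Gamma G f v \<Longrightarrow> f u = f v"
  by (simp add: Gamma_mem)

lemma Gamma_step: assumes "v \<in> verts G" "w \<in> verts G" "(v,w) \<in> arcs G \<or> (w,v) \<in> arcs G" "f v = f w"
  "u \<in> Gamma G f w" shows "u \<in> Gamma G f v"
proof -
  let ?E = "{(a,b). (a \<in> verts G \<and> f a = f v) \<and> (b \<in> verts G \<and> f b = f v) \<and> ((a,b) \<in> arcs G \<or> (b,a) \<in> arcs G)}"
  have e: "(v,w) \<in> ?E" using assms by auto
  have "(w,u) \<in> ?E\<^sup>*" using assms(5) assms(4) by (simp add: Gamma_mem)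
  hence "(v,u) \<in> ?E\<^sup>*" by (rule converse_rtrancl_into_rtrancl[OF e])
  thus ?thesis using assms by (simp add: Gamma_mem)
qed

lemma Gamma_sub:
  assumes dg: "is_digraph G" and eq: "\<forall>a b. (a,b) \<in> arcs G \<longrightarrow> (f a = f b \<longleftrightarrow> g a = g b)"
  shows "Gamma G f v \<subseteq> Gamma G g v"
proof
  fix w assume w: "w \<in> Gamma G f v"
  let ?Ef = "{(a,b). (a \<in> verts G \<and> f a = f v) \<and> (b \<in> verts G \<and> f b = f v) \<and> ((a,b) \<in> arcs G \<or> (b,a) \<in> arcs G)}"
  let ?Eg = "{(a,b). (a \<in> verts G \<and> g a = g v) \<and> (b \<in> verts G \<and> g b = g v) \<and> ((a,b) \<in> arcs G \<or> (b,a) \<in> arcs G)}"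
  have v: "v \<in> verts G" using w by (simp add: Gamma_mem)
  have "(v,w) \<in> ?Ef\<^sup>*" using w by (simp add: Gamma_mem)
  hence "(v,w) \<in> ?Eg\<^sup>* \<and> g w = g v"
  proof (induction rule: rtrancl_induct)
    case base thus ?case by simp
  next
    case (step y z)
    have "g y = g z" using step(2) eq[rule_format, of y z] eq[rule_format, of z y] by auto
    hence "(y,z) \<in> ?Eg" using step by auto
    thus ?case using step \<open>g y = g z\<close> by (metis (no_types, lifting) rtrancl_into_rtrancl)
  qed
  thus "w \<in> Gamma G g v" using w v by (simp add: Gamma_mem)
qed

lemma Gamma_eq:
  assumes "is_digraph G" and "\<forall>a b. (a,b) \<in> arcs G \<longrightarrow> (f a = f b \<longleftrightarrow> g a = g b)"
  shows "Gamma G f v = Gamma G g v"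
proof -
  have e2: "\<forall>a b. (a,b) \<in> arcs G \<longrightarrow> (g a = g b \<longleftrightarrow> f a = f b)" using assms(2) by auto
  show ?thesis using Gamma_sub[OF assms] Gamma_sub[OF assms(1) e2] by (rule equalityI)
qed

context rs begin

definition "Dset G \<xi> = {v \<in> verts G. \<xi> v \<in> X \<and>
   (\<exists>u\<in>Gamma G \<xi> v. \<exists>k\<in>verts G. \<xi> k \<in> M \<and> ((u,k) \<in> arcs G \<or> (k,u) \<in> arcs G))}"

definition "rho G \<xi> = (\<lambda>v. if v \<in> Dset G \<xi> then \<beta> (\<xi> v) else \<xi> v)"

definition "Cset G \<psi> = {v \<in> verts G. \<psi> v \<in> Y \<and>
   (\<exists>u\<in>Gamma G \<psi> v. \<exists>k\<in>verts G. \<psi> k \<in> M \<and> ((u,k) \<in> arcs G \<or> (k,u) \<in> arcs G))}"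

lemma Sa_r: "(a,b)\<in>A \<Longrightarrow> \<not>(a\<in>M\<and>b\<in>X) \<Longrightarrow> \<not>(a\<in>X\<and>b\<in>M) \<Longrightarrow> (a,b)\<in>Sa"
  by (auto simp: Sa_def rearr_def arcs_def)
lemma Sa_d: "m\<in>M \<Longrightarrow> x\<in>X \<Longrightarrow> (m,x)\<in>A \<Longrightarrow> (m,\<beta> x)\<in>Sa"
  by (auto simp: Sa_def rearr_def arcs_def)
lemma Sa_u: "m\<in>M \<Longrightarrow> x\<in>X \<Longrightarrow> (x,m)\<in>A \<Longrightarrow> (\<beta> x,m)\<in>Sa"
  by (auto simp: Sa_def rearr_def arcs_def)

context
  fixes G :: "'b digraph" and \<xi> :: "'b \<Rightarrow> 'a"
  assumes dg: "is_digraph G" and xh: "\<xi> \<in> homs G R"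
begin

lemma gV: "(v,w) \<in> arcs G \<Longrightarrow> v \<in> verts G \<and> w \<in> verts G"
  using dg by (auto simp: is_digraph_def)

lemma xa: "(v,w) \<in> arcs G \<Longrightarrow> (\<xi> v, \<xi> w) \<in> A"
  using xh by (auto simp: homs_def)

lemma xv: "v \<in> verts G \<Longrightarrow> \<xi> v \<in> verts R"
  using xh by (auto simp: homs_def)

lemma xu: "v \<notin> verts G \<Longrightarrow> \<xi> v = undefined"
  using xh by (auto simp: homs_def)

lemma D_closed: "(v,w) \<in> arcs G \<or> (w,v) \<in> arcs G \<Longrightarrow> v \<in> Dset G \<xi> \<Longrightarrow> \<xi> w = \<xi> v \<Longrightarrow> w \<in> Dset G \<xi>"
proof -
  assume a: "(v,w) \<in> arcs G \<or> (w,v) \<in> arcs G" "v \<in> Dset G \<xi>" "\<xi> w = \<xi> v"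
  then obtain u k where uk: "u\<in>Gamma G \<xi> v" "k\<in>verts G" "\<xi> k \<in> M" "(u,k) \<in> arcs G \<or> (k,u) \<in> arcs G"
    and vX: "\<xi> v \<in> X" unfolding Dset_def by blast
  have vw: "v \<in> verts G" "w \<in> verts G" using a(1) gV by blast+
  have "u \<in> Gamma G \<xi> w" using Gamma_step[of w G v \<xi> u] vw a(1) a(3) uk(1) by blast
  thus "w \<in> Dset G \<xi>" unfolding Dset_def using uk vw vX a(3) by auto
qed

lemma D_M: "(v,w) \<in> arcs G \<or> (w,v) \<in> arcs G \<Longrightarrow> \<xi> v \<in> M \<Longrightarrow> \<xi> w \<in> X \<Longrightarrow> w \<in> Dset G \<xi>"
  unfolding Dset_def using Gamma_self[of w G \<xi>] gV by blast

lemma D_V: "v \<in> Dset G \<xi> \<Longrightarrow> v \<in> verts G \<and> \<xi> v \<in> X"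
  by (simp add: Dset_def)

lemma rho_arc: assumes "(v,w) \<in> arcs G" shows "(rho G \<xi> v, rho G \<xi> w) \<in> Sa"
proof -
  have ab: "(\<xi> v, \<xi> w) \<in> A" using xa assms .
  show ?thesis
  proof (cases "v \<in> Dset G \<xi>")
    case vD: True
    show ?thesis
    proof (cases "w \<in> Dset G \<xi>")
      case True
      thus ?thesis using vD ab D_V bR bM by (simp add: rho_def Sa_r)
    next
      case False
      show ?thesis
      proof (cases "\<xi> w \<in> M")
        case True thus ?thesis using vD False ab D_V Sa_u by (simp add: rho_def)
      next
        case nM: False
        have "\<xi> w \<noteq> \<xi> v" using D_closed[of v w] assms vD False by blast
        hence "(\<beta> (\<xi> v), \<xi> w) \<in> A" using outN[of "\<xi> v" "\<xi> w"] D_V vD ab nM by auto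
        thus ?thesis using vD False nM D_V bM Sa_r by (simp add: rho_def)
      qed
    qed
  next
    case vD: False
    show ?thesis
    proof (cases "w \<in> Dset G \<xi>")
      case wD: True
      show ?thesis
      proof (cases "\<xi> v \<in> M")
        case True thus ?thesis using vD wD ab D_V Sa_d by (simp add: rho_def)
      next
        case nM: False
        have "\<xi> w \<noteq> \<xi> v" using D_closed[of w v] assms vD wD by metis
        hence "(\<xi> v, \<beta> (\<xi> w)) \<in> A" using inN[of "\<xi> w" "\<xi> v"] D_V wD ab nM by auto
        thus ?thesis using vD wD nM D_V bM Sa_r by (simp add: rho_def)
      qed
    next
      case wD: False
      have "\<not>(\<xi> v \<in> M \<and> \<xi> w \<in> X)" using D_M[of v w] assms wD by blast
      moreover have "\<not>(\<xi> v \<in> X \<and> \<xi> w \<in> M)" using D_M[of w v] assms vD by blast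
      ultimately show ?thesis using vD wD ab Sa_r by (simp add: rho_def)
    qed
  qed
qed

lemma rho_hom: "rho G \<xi> \<in> homs G (transitive_hull (rearr R X M \<beta>))"
proof -
  have V: "verts (transitive_hull (rearr R X M \<beta>)) = verts R"
    by (simp add: transitive_hull_def rearr_def verts_def)
  have Ar: "arcs (transitive_hull (rearr R X M \<beta>)) = Sa\<^sup>+"
    by (simp add: transitive_hull_def Sa_def arcs_def)
  show ?thesis unfolding homs_def V Ar
  proof (intro CollectI conjI PiE_I ballI)
    fix v assume "v \<in> verts G" thus "rho G \<xi> v \<in> verts R"
      using xv D_V bY YV by (auto simp: rho_def)
  next
    fix v assume "v \<notin> verts G" thus "rho G \<xi> v = undefined"
      using xu D_V by (auto simp: rho_def)
  next
    fix p assume "p \<in> arcs G"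
    thus "case p of (v, w) \<Rightarrow> (rho G \<xi> v, rho G \<xi> w) \<in> Sa\<^sup>+"
      using rho_arc by (auto intro: r_into_trancl)
  qed
qed

lemma rho_adj: assumes "(v,w) \<in> arcs G" shows "rho G \<xi> v = rho G \<xi> w \<longleftrightarrow> \<xi> v = \<xi> w"
proof -
  have ab: "(\<xi> v, \<xi> w) \<in> A" using xa assms .
  { fix a b assume ab': "(a,b) \<in> arcs G \<or> (b,a) \<in> arcs G" "a \<in> Dset G \<xi>" "b \<notin> Dset G \<xi>"
    have ne: "\<xi> a \<noteq> \<xi> b" using D_closed[of a b] ab' by metis
    have arc: "(\<xi> a, \<xi> b) \<in> A \<or> (\<xi> b, \<xi> a) \<in> A" using ab' xa by blast
    have "\<beta> (\<xi> a) \<noteq> \<xi> b"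
    proof
      assume "\<beta> (\<xi> a) = \<xi> b"
      hence "\<beta> (\<xi> a) = \<xi> a" using notadj[of "\<xi> a"] arc D_V ab' by auto
      thus False using ne \<open>\<beta> (\<xi> a) = \<xi> b\<close> by simp
    qed
    hence "rho G \<xi> a \<noteq> rho G \<xi> b \<and> \<xi> a \<noteq> \<xi> b" using ne ab' by (simp add: rho_def)
  } note key = this
  show ?thesis
  proof (cases "v \<in> Dset G \<xi>"; cases "w \<in> Dset G \<xi>")
    assume "v \<in> Dset G \<xi>" "w \<in> Dset G \<xi>"
    thus ?thesis using binj D_V by (auto simp: rho_def)
  next
    assume "v \<in> Dset G \<xi>" "w \<notin> Dset G \<xi>"
    thus ?thesis using key[of v w] assms by blast
  next
    assume "v \<notin> Dset G \<xi>" "w \<in> Dset G \<xi>"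
    thus ?thesis using key[of w v] assms by metis
  next
    assume "v \<notin> Dset G \<xi>" "w \<notin> Dset G \<xi>"
    thus ?thesis by (simp add: rho_def)
  qed
qed

lemma rho_Gamma: "Gamma G (rho G \<xi>) v = Gamma G \<xi> v"
  using Gamma_eq[OF dg] rho_adj by blast

lemma rho_M: "k \<in> verts G \<Longrightarrow> rho G \<xi> k \<in> M \<longleftrightarrow> \<xi> k \<in> M"
  using D_V bM XM by (auto simp: rho_def)

lemma D_C: "Dset G \<xi> = Cset G (rho G \<xi>)"
proof
  show "Dset G \<xi> \<subseteq> Cset G (rho G \<xi>)"
  proof
    fix v assume v: "v \<in> Dset G \<xi>"
    then obtain u k where uk: "u\<in>Gamma G \<xi> v" "k\<in>verts G" "\<xi> k \<in> M" "(u,k) \<in> arcs G \<or> (k,u) \<in> arcs G"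
      unfolding Dset_def by blast
    have vV: "v \<in> verts G" "\<xi> v \<in> X" using D_V v by blast+
    have "rho G \<xi> v \<in> Y" using v vV bY by (simp add: rho_def)
    moreover have "rho G \<xi> k \<in> M" using rho_M[OF uk(2)] uk(3) by blast
    ultimately show "v \<in> Cset G (rho G \<xi>)" unfolding Cset_def rho_Gamma
      using vV(1) uk(1,2,4) by blast
  qed
next
  show "Cset G (rho G \<xi>) \<subseteq> Dset G \<xi>"
  proof
    fix v assume v: "v \<in> Cset G (rho G \<xi>)"
    then obtain u k where uk: "u\<in>Gamma G \<xi> v" "k\<in>verts G" "\<xi> k \<in> M" "(u,k) \<in> arcs G \<or> (k,u) \<in> arcs G"
      and vY: "rho G \<xi> v \<in> Y" and vV: "v \<in> verts G"
      unfolding Cset_def rho_Gamma using rho_M by blast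
    show "v \<in> Dset G \<xi>"
    proof (rule ccontr)
      assume "v \<notin> Dset G \<xi>"
      hence y: "\<xi> v \<in> Y" using vY by (simp add: rho_def)
      have "\<xi> u = \<xi> v" using Gamma_val uk by metis
      hence "(\<xi> u, \<xi> k) \<in> A \<or> (\<xi> k, \<xi> u) \<in> A" "\<xi> u \<in> Y" using uk(4) xa[of u k] xa[of k u] y \<open>\<xi> u = \<xi> v\<close> by auto
      thus False using noMY[of "\<xi> k" "\<xi> u"] noYM[of "\<xi> k" "\<xi> u"] uk(3) by blast
    qed
  qed
qed

end

lemma rho_inj:
  assumes dg: "is_digraph G" and h1: "\<xi>1 \<in> homs G R" and h2: "\<xi>2 \<in> homs G R"
    and eq: "rho G \<xi>1 = rho G \<xi>2"
  shows "\<xi>1 = \<xi>2"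
proof
  fix v
  have D: "Dset G \<xi>1 = Dset G \<xi>2" unfolding D_C[OF dg h1] D_C[OF dg h2] eq ..
  have e: "rho G \<xi>1 v = rho G \<xi>2 v" using eq by simp
  show "\<xi>1 v = \<xi>2 v"
  proof (cases "v \<in> Dset G \<xi>1")
    case True
    hence "\<beta> (\<xi>1 v) = \<beta> (\<xi>2 v)" using e D by (simp add: rho_def)
    moreover have "\<xi>1 v \<in> X" "\<xi>2 v \<in> X" using D_V[OF dg h1, of v] D_V[OF dg h2, of v] True D by auto
    ultimately show ?thesis using binj by blast
  next
    case False thus ?thesis using e D by (simp add: rho_def)
  qed
qed

lemma gamma_T: "gamma_below R (transitive_hull (rearr R X M \<beta>))"
  unfolding gamma_below_def
proof (intro allI impI)
  fix G :: "nat digraph" assume dg: "is_digraph G"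
  show "\<exists>\<rho>. \<rho> \<in> homs G R \<rightarrow> homs G (transitive_hull (rearr R X M \<beta>)) \<and> inj_on \<rho> (homs G R) \<and>
          (\<forall>\<xi> \<in> homs G R. \<forall>v \<in> verts G. Gamma G (\<rho> \<xi>) v = Gamma G \<xi> v)"
  proof (intro exI conjI)
    show "rho G \<in> homs G R \<rightarrow> homs G (transitive_hull (rearr R X M \<beta>))"
      using rho_hom[OF dg] by blast
    show "inj_on (rho G) (homs G R)" unfolding inj_on_def using rho_inj[OF dg] by blast
    show "\<forall>\<xi> \<in> homs G R. \<forall>v \<in> verts G. Gamma G (rho G \<xi>) v = Gamma G \<xi> v"
      using rho_Gamma[OF dg] by blast
  qed
qed

end

theorem corollary7:
  fixes R :: "'a digraph" and X M Y :: "'a set" and \<beta> :: "'a \<Rightarrow> 'a"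
  assumes "is_poset R"
    and "X \<subseteq> verts R" and "M \<subseteq> verts R" and "X \<inter> M = {}"
    and "Y \<subseteq> verts R" and "M \<inter> Y = {}" and "\<forall>y \<in> Y. M \<inter> nbrs R y = {}"
    and "bij_betw \<beta> X Y"
    and "\<forall>x1 \<in> X. \<forall>x2 \<in> X. (x1, x2) \<in> arcs (induced R X) \<longrightarrow> (\<beta> x1, \<beta> x2) \<in> arcs (induced R Y)"
    and "\<forall>x \<in> X. nbrs_in R x - M \<subseteq> nbrs_in R (\<beta> x)"
    and "\<forall>x \<in> X. nbrs_out R x - M \<subseteq> nbrs_out R (\<beta> x)"
    and "convex R X"
    and "\<not> (\<exists>p. walk_from_to R M Y p)"
    and "\<not> (\<exists>p. walk_from_to R Y M p)"
  shows "is_poset (transitive_hull (rearr R X M \<beta>)) \<and>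
         gamma_below R (transitive_hull (rearr R X M \<beta>))"
proof -
  interpret rs R X M Y \<beta> using assms by (unfold_locales) auto
  show ?thesis using poset_T gamma_T by blast
qed

end
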